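(* Let $\nu(dx)=f(x)\,dx$ be a measure on $\mathbb{R}$ such that $E=\operatorname{supp}f$ is a bounded subset of $\mathbb{R}$, and such that for some constants $C>\varepsilon>0$ we have $|f-C|<\varepsilon$ on $E$. Let $\nu'(dx)=C\chi_E(x)\,dx$, $\nu_t=D_t^*(\nu)$ and $\nu'_t=D_t^*(\nu')$. Let $\mu$ be a probability measure on $\mathbb{R}$ whose support is bounded. Then $$\left|\liminf_{t\to0}\frac{H(\mu*\nu_t')}{|\log t|}-\liminf_{t\to0}\frac{H(\mu*\nu_t)}{|\log t|}\right|\le\varepsilon\lambda(E),$$ where $\lambda$ is Lebesgue measure.
   Context: For $t>0$, $D_t:\mathbb{R}\to\mathbb{R}$ is $x\mapsto tx$, and $D_t^*$ denotes push-forward by $D_t$. For non-negative measurable $q$, $H(q(x)\,dx)=\int q\log q\,dx$, even when $q\,dx$ is not a probability measure. *)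

theory Defs
  imports "HOL-Probability.Probability"
begin

definition fun_support :: "(real \<Rightarrow> real) \<Rightarrow> real set" where
  "fun_support f = closure {x. f x \<noteq> 0}"

definition measure_support :: "real measure \<Rightarrow> real set" where
  "measure_support M = {x. \<forall>e>0. emeasure M (ball x e) > 0}"

definition dilate :: "real \<Rightarrow> real measure \<Rightarrow> real measure" where
  "dilate t M = distr M borel (\<lambda>x. t * x)"

definition entropy_H :: "real measure \<Rightarrow> real" where
  "entropy_H M = (\<integral>x. (let q = enn2real (RN_deriv lborel M x) in q * ln q) \<partial>lborel)"

end

theory Submission
  imports Defs
begin

lemma support_AE:
  fixes \<mu> :: "real measure"
  assumes mu_sets: "sets \<mu> = sets borel" and bdd: "bounded (measure_support \<mu>)"
  obtains R where "R \<ge> 0" "AE y in \<mu>. \<bar>y\<bar> \<le> R"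
proof -
  obtain a where a: "\<And>x. x \<in> measure_support \<mu> \<Longrightarrow> norm x \<le> a"
    using bdd unfolding bounded_iff by blast
  define R where "R = max a 0"
  define F where "F = {ball x e | x e. e > 0 \<and> emeasure \<mu> (ball x e) = 0}"
  have "\<And>S. S \<in> F \<Longrightarrow> open S" unfolding F_def by auto
  then obtain F' where F': "F' \<subseteq> F" "countable F'" "\<Union>F' = \<Union>F" by (rule Lindelof)
  have null: "\<Union>F' \<in> null_sets \<mu>"
  proof -
    have "(\<Union>S\<in>F'. id S) \<in> null_sets \<mu>"
    proof (rule null_sets_UN')
      show "countable F'" by fact
      fix S assume "S \<in> F'"
      then have "S \<in> F" using F' by auto
      then obtain x e where xe: "S = ball x e" "emeasure \<mu> (ball x e) = 0" unfolding F_def by blast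
      have "ball x e \<in> sets \<mu>" using mu_sets by simp
      then show "id S \<in> null_sets \<mu>" using xe by (simp add: null_sets_def)
    qed
    then show ?thesis by simp
  qed
  have "{y \<in> space \<mu>. \<not> \<bar>y\<bar> \<le> R} \<subseteq> \<Union>F'"
  proof
    fix y assume y: "y \<in> {y \<in> space \<mu>. \<not> \<bar>y\<bar> \<le> R}"
    have "y \<notin> measure_support \<mu>"
    proof
      assume "y \<in> measure_support \<mu>"
      then have "norm y \<le> a" by (rule a)
      then show False using y unfolding R_def by auto
    qed
    then obtain e where "e > 0" "\<not> emeasure \<mu> (ball y e) > 0" unfolding measure_support_def by auto
    then have "ball y e \<in> F" unfolding F_def by (auto simp: not_gr_zero)
    moreover have "y \<in> ball y e" using \<open>e > 0\<close> by simp
    ultimately show "y \<in> \<Union>F'" using F' by blast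
  qed
  then have "AE y in \<mu>. \<bar>y\<bar> \<le> R" by (rule AE_I'[OF null])
  moreover have "R \<ge> 0" unfolding R_def by simp
  ultimately show ?thesis using that by blast
qed

lemma dilate_density:
  fixes q :: "real \<Rightarrow> real"
  assumes [measurable]: "q \<in> borel_measurable borel" and t: "t > 0"
  shows "dilate t (density lborel (\<lambda>x. ennreal (q x))) = density lborel (\<lambda>x. ennreal (q (x/t) / t))"
proof (rule measure_eqI)
  show "sets (dilate t (density lborel (\<lambda>x. ennreal (q x)))) = sets (density lborel (\<lambda>x. ennreal (q (x/t) / t)))"
    by (simp add: dilate_def)
  fix A assume "A \<in> sets (dilate t (density lborel (\<lambda>x. ennreal (q x))))"
  then have [measurable]: "A \<in> sets borel" by (simp add: dilate_def)
  have "emeasure (density lborel (\<lambda>x. ennreal (q (x/t) / t))) A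
      = (\<integral>\<^sup>+x. ennreal (q (x/t) / t) * indicator A x \<partial>lborel)"
    by (simp add: emeasure_density)
  also have "\<dots> = ennreal \<bar>t\<bar> * (\<integral>\<^sup>+x. ennreal (q ((0 + t * x)/t) / t) * indicator A (0 + t * x) \<partial>lborel)"
    by (rule nn_integral_real_affine) (use t in auto)
  also have "\<dots> = (\<integral>\<^sup>+x. ennreal t * (ennreal (q x / t) * indicator A (t * x)) \<partial>lborel)"
    using t by (subst nn_integral_cmult) auto
  also have "\<dots> = (\<integral>\<^sup>+x. ennreal (q x) * indicator ((\<lambda>x. t * x) -` A) x \<partial>lborel)"
  proof (rule nn_integral_cong)
    fix x
    have "ennreal t * ennreal (q x / t) = ennreal (q x)"
      using t by (subst ennreal_mult'[symmetric]) auto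
    then show "ennreal t * (ennreal (q x / t) * indicator A (t * x)) = ennreal (q x) * indicator ((\<lambda>x. t * x) -` A) x"
      by (simp add: mult.assoc[symmetric] indicator_def)
  qed
  also have "\<dots> = emeasure (dilate t (density lborel (\<lambda>x. ennreal (q x)))) A"
  proof -
    have pre: "(\<lambda>x. t * x) -` A \<in> sets lborel"
      using measurable_sets[of "\<lambda>x. t * x" borel borel A] by simp
    show ?thesis unfolding dilate_def
      by (simp add: emeasure_distr emeasure_density[OF _ pre])
  qed
  finally show "emeasure (dilate t (density lborel (\<lambda>x. ennreal (q x)))) A = emeasure (density lborel (\<lambda>x. ennreal (q (x/t) / t))) A"
    by simp
qed

lemma conv_density:
  fixes p :: "real \<Rightarrow> ennreal" and \<mu> :: "real measure"
  assumes [measurable]: "p \<in> borel_measurable borel"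
  assumes fin: "finite_measure \<mu>" "finite_measure (density lborel p)"
  assumes mu_sets[measurable_cong]: "sets \<mu> = sets borel"
  shows "\<mu> \<star> density lborel p = density lborel (\<lambda>x. \<integral>\<^sup>+y. p (x - y) \<partial>\<mu>)"
proof (rule measure_eqI)
  interpret M: finite_measure \<mu> by fact
  interpret pair_sigma_finite \<mu> lborel ..
  show "sets (\<mu> \<star> density lborel p) = sets (density lborel (\<lambda>x. \<integral>\<^sup>+y. p (x - y) \<partial>\<mu>))" by simp
  fix A assume "A \<in> sets (\<mu> \<star> density lborel p)"
  then have [measurable]: "A \<in> sets borel" by simp
  have "emeasure (\<mu> \<star> density lborel p) A = (\<integral>\<^sup>+y. \<integral>\<^sup>+x. indicator A (y + x) \<partial>density lborel p \<partial>\<mu>)"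
    by (rule convolution_emeasure') (use fin mu_sets in auto)
  also have "\<dots> = (\<integral>\<^sup>+y. \<integral>\<^sup>+x. p x * indicator A (y + x) \<partial>lborel \<partial>\<mu>)"
    by (rule nn_integral_cong) (simp add: nn_integral_density)
  also have "\<dots> = (\<integral>\<^sup>+y. \<integral>\<^sup>+z. p (z - y) * indicator A z \<partial>lborel \<partial>\<mu>)"
  proof (rule nn_integral_cong)
    fix y
    have "(\<integral>\<^sup>+z. p (z - y) * indicator A z \<partial>lborel) = ennreal \<bar>1\<bar> * (\<integral>\<^sup>+x. p ((y + 1 * x) - y) * indicator A (y + 1 * x) \<partial>lborel)"
      by (rule nn_integral_real_affine) auto
    then show "(\<integral>\<^sup>+x. p x * indicator A (y + x) \<partial>lborel) = (\<integral>\<^sup>+z. p (z - y) * indicator A z \<partial>lborel)"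
      by simp
  qed
  also have "\<dots> = (\<integral>\<^sup>+z. \<integral>\<^sup>+y. p (z - y) * indicator A z \<partial>\<mu> \<partial>lborel)"
    by (rule Fubini'[symmetric]) simp
  also have "\<dots> = (\<integral>\<^sup>+z. (\<integral>\<^sup>+y. p (z - y) \<partial>\<mu>) * indicator A z \<partial>lborel)"
    by (rule nn_integral_cong) (simp add: nn_integral_multc)
  also have "\<dots> = emeasure (density lborel (\<lambda>x. \<integral>\<^sup>+y. p (x - y) \<partial>\<mu>)) A"
    by (simp add: emeasure_density)
  finally show "emeasure (\<mu> \<star> density lborel p) A = emeasure (density lborel (\<lambda>x. \<integral>\<^sup>+y. p (x - y) \<partial>\<mu>)) A" .
qed

lemma liminf_close:
  fixes A B :: "real \<Rightarrow> real" and \<delta> M :: real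
  assumes close: "\<And>\<eta>. \<eta> > 0 \<Longrightarrow> eventually (\<lambda>t. \<bar>A t - B t\<bar> \<le> \<delta> + \<eta>) (at_right 0)"
    and bndA: "eventually (\<lambda>t. \<bar>A t\<bar> \<le> M) (at_right 0)"
  shows "\<bar>Liminf (at_right 0) (\<lambda>t. ereal (A t)) - Liminf (at_right 0) (\<lambda>t. ereal (B t))\<bar> \<le> ereal \<delta>"
proof -
  let ?F = "at_right (0::real)"
  have nb: "?F \<noteq> bot" by simp
  have bndB: "eventually (\<lambda>t. \<bar>B t\<bar> \<le> M + \<delta> + 1) ?F"
    using close[OF zero_less_one] bndA by eventually_elim auto
  have fin: "\<exists>l. Liminf ?F (\<lambda>t. ereal (X t)) = ereal l"
    if b: "eventually (\<lambda>t. \<bar>X t\<bar> \<le> N) ?F" for X :: "real \<Rightarrow> real" and N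
  proof -
    have "ereal (- N) \<le> Liminf ?F (\<lambda>t. ereal (X t))"
      by (rule Liminf_bounded) (use b in \<open>eventually_elim, auto\<close>)
    moreover have "Liminf ?F (\<lambda>t. ereal (X t)) \<le> ereal N"
    proof -
      have "Limsup ?F (\<lambda>t. ereal (X t)) \<le> ereal N"
        by (rule Limsup_bounded) (use b in \<open>eventually_elim, auto\<close>)
      then show ?thesis using Liminf_le_Limsup[OF nb, of "\<lambda>t. ereal (X t)"] by simp
    qed
    ultimately show ?thesis by (cases "Liminf ?F (\<lambda>t. ereal (X t))") auto
  qed
  obtain la where la: "Liminf ?F (\<lambda>t. ereal (A t)) = ereal la" using fin[OF bndA] by blast
  obtain lb where lb: "Liminf ?F (\<lambda>t. ereal (B t)) = ereal lb" using fin[OF bndB] by blast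
  have one: "Liminf ?F (\<lambda>t. ereal (X t)) \<le> Liminf ?F (\<lambda>t. ereal (Y t)) + ereal (\<delta> + \<eta>)"
    if "\<eta> > 0" and ev: "eventually (\<lambda>t. X t \<le> Y t + (\<delta> + \<eta>)) ?F" for X Y :: "real \<Rightarrow> real" and \<eta>
  proof -
    have "Liminf ?F (\<lambda>t. ereal (X t)) \<le> Liminf ?F (\<lambda>t. ereal (Y t) + ereal (\<delta> + \<eta>))"
      by (rule Liminf_mono) (use ev in \<open>eventually_elim, auto\<close>)
    also have "\<dots> = Liminf ?F (\<lambda>t. ereal (Y t)) + ereal (\<delta> + \<eta>)"
      by (rule Liminf_add_ereal_right[OF nb]) simp
    finally show ?thesis .
  qed
  have "la \<le> lb + \<delta>"
  proof (rule field_le_epsilon)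
    fix \<eta> :: real assume "\<eta> > 0"
    have "eventually (\<lambda>t. A t \<le> B t + (\<delta> + \<eta>)) ?F"
      using close[OF \<open>\<eta> > 0\<close>] by eventually_elim auto
    from one[OF \<open>\<eta> > 0\<close> this] show "la \<le> lb + \<delta> + \<eta>" using la lb by simp
  qed
  moreover have "lb \<le> la + \<delta>"
  proof (rule field_le_epsilon)
    fix \<eta> :: real assume "\<eta> > 0"
    have "eventually (\<lambda>t. B t \<le> A t + (\<delta> + \<eta>)) ?F"
      using close[OF \<open>\<eta> > 0\<close>] by eventually_elim auto
    from one[OF \<open>\<eta> > 0\<close> this] show "lb \<le> la + \<delta> + \<eta>" using la lb by simp
  qed
  ultimately show ?thesis using la lb by simp
qed

lemma entropy_conv:
  fixes q :: "real \<Rightarrow> real" and \<mu> :: "real measure"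
  assumes q_meas[measurable]: "q \<in> borel_measurable borel" and q_nn: "\<And>x. q x \<ge> 0"
    and q_fin: "finite_measure (density lborel (\<lambda>x. ennreal (q x)))"
    and mu_fin: "finite_measure \<mu>" and mu_sets[measurable_cong]: "sets \<mu> = sets borel"
    and t: "t > 0"
  shows "entropy_H (\<mu> \<star> dilate t (density lborel (\<lambda>x. ennreal (q x))))
    = (\<integral>x. enn2real (\<integral>\<^sup>+y. ennreal (q ((x - y) / t) / t) \<partial>\<mu>) * ln (enn2real (\<integral>\<^sup>+y. ennreal (q ((x - y) / t) / t) \<partial>\<mu>)) \<partial>lborel)"
proof -
  interpret M: finite_measure \<mu> by fact
  define G where "G x = (\<integral>\<^sup>+y. ennreal (q ((x - y) / t) / t) \<partial>\<mu>)" for x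
  have G_meas[measurable]: "G \<in> borel_measurable borel" unfolding G_def
    by (rule M.borel_measurable_nn_integral) measurable
  have fin2: "finite_measure (density lborel (\<lambda>x. ennreal (q (x/t) / t)))"
  proof -
    have "finite_measure (dilate t (density lborel (\<lambda>x. ennreal (q x))))"
      unfolding dilate_def by (rule finite_measure.finite_measure_distr[OF q_fin]) simp
    then show ?thesis using dilate_density[OF q_meas t] by simp
  qed
  have eq: "\<mu> \<star> dilate t (density lborel (\<lambda>x. ennreal (q x))) = density lborel G"
    unfolding dilate_density[OF q_meas t] G_def
    by (subst conv_density[OF _ mu_fin fin2 mu_sets]) auto
  have "AE x in lborel. G x = RN_deriv lborel (density lborel G) x"
    by (rule sigma_finite_measure.RN_deriv_unique[OF lborel.sigma_finite_measure_axioms]) auto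
  then have "entropy_H (density lborel G) = (\<integral>x. enn2real (G x) * ln (enn2real (G x)) \<partial>lborel)"
    unfolding entropy_H_def Let_def
    by (intro integral_cong_AE) (auto elim!: AE_mp)
  then show ?thesis unfolding eq G_def .
qed

lemma xlnx_ge: "(u::real) \<ge> 0 \<Longrightarrow> u * ln u \<ge> u - 1"
proof (cases "u = 0")
  case False
  assume "u \<ge> 0" then have u: "u > 0" using False by simp
  have "ln (1/u) \<le> 1/u - 1" using u by (intro ln_le_minus_one) simp
  then have "- ln u \<le> 1/u - 1" using u by (simp add: ln_div)
  then have "u * (- ln u) \<le> u * (1/u - 1)" using u by (intro mult_left_mono) auto
  then show ?thesis using u by (simp add: algebra_simps)
qed simp

lemma xlnx_abs: "(u::real) \<ge> 0 \<Longrightarrow> \<bar>u * ln u\<bar> \<le> u^2 + 1"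
proof (cases "u = 0")
  case False
  assume "u \<ge> 0" then have u: "u > 0" using False by simp
  have "ln u \<le> u - 1" using u by (rule ln_le_minus_one)
  then have "u * ln u \<le> u * (u - 1)" using u by (intro mult_left_mono) auto
  moreover have "u * ln u \<ge> u - 1" using u by (intro xlnx_ge) simp
  moreover have "u * u \<ge> 0" by simp
  moreover have "u * (u - 1) = u * u - u" by (simp add: algebra_simps)
  ultimately show ?thesis unfolding power2_eq_square abs_le_iff using u by linarith
qed simp

lemma klnk_bound:
  fixes k t :: real
  assumes t: "0 < t" "t < 1" and k: "0 \<le> k" "k \<le> 1/t"
  shows "\<bar>k * ln k\<bar> \<le> k * (- ln t) + 1"
proof (cases "k = 0")
  case False
  then have kp: "k > 0" using k by simp
  have "ln k \<le> ln (1/t)" using kp k t by simp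
  then have "ln k \<le> - ln t" using t by (simp add: ln_div)
  then have up: "k * ln k \<le> k * (- ln t)" using kp by (intro mult_left_mono) auto
  have lo: "k * ln k \<ge> k - 1" using k by (intro xlnx_ge) simp
  have "- ln t > 0" using t by simp
  then have "k * (- ln t) \<ge> 0" using kp by (intro mult_nonneg_nonneg) auto
  then show ?thesis using up lo kp by (auto simp: abs_le_iff)
qed simp

lemma main_pointwise:
  fixes k t g C \<epsilon> :: real
  assumes eps: "0 < \<epsilon>" "\<epsilon> < C" and t: "0 < t" "t < 1" and k: "0 \<le> k" "k \<le> 1/t"
    and g: "(C - \<epsilon>) * k \<le> g" "g \<le> (C + \<epsilon>) * k"
  shows "\<bar>g * ln g - (C * k) * ln (C * k)\<bar>
     \<le> ((C + \<epsilon>) * (\<bar>ln (C - \<epsilon>)\<bar> + \<bar>ln (C + \<epsilon>)\<bar>) + C * \<bar>ln C\<bar>) * k + \<epsilon> * (k * (- ln t) + 1)"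
proof (cases "k = 0")
  case True
  then have "g = 0" using g by simp
  then show ?thesis using True eps by simp
next
  case False
  then have kp: "k > 0" using k by simp
  define a where "a = g / k"
  have ga: "g = a * k" unfolding a_def using kp by simp
  have a1: "C - \<epsilon> \<le> a" unfolding a_def using g kp by (simp add: field_simps)
  have a2: "a \<le> C + \<epsilon>" unfolding a_def using g kp by (simp add: field_simps)
  have ap: "a > 0" using a1 eps by simp
  have Cp: "C > 0" using eps by simp
  have "ln (C - \<epsilon>) \<le> ln a" using a1 eps by simp
  moreover have "ln a \<le> ln (C + \<epsilon>)" using a2 ap by simp
  ultimately have lna: "\<bar>ln a\<bar> \<le> \<bar>ln (C - \<epsilon>)\<bar> + \<bar>ln (C + \<epsilon>)\<bar>" by (auto simp: abs_le_iff)
  have "\<bar>a * ln a\<bar> = a * \<bar>ln a\<bar>" using ap by (simp add: abs_mult)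
  also have "\<dots> \<le> (C + \<epsilon>) * (\<bar>ln (C - \<epsilon>)\<bar> + \<bar>ln (C + \<epsilon>)\<bar>)"
    using a2 lna ap by (intro mult_mono) auto
  finally have aln: "\<bar>a * ln a\<bar> \<le> (C + \<epsilon>) * (\<bar>ln (C - \<epsilon>)\<bar> + \<bar>ln (C + \<epsilon>)\<bar>)" .
  have kk: "\<bar>k * ln k\<bar> \<le> k * (- ln t) + 1" by (rule klnk_bound[OF t k])
  have "\<bar>a - C\<bar> \<le> \<epsilon>" using a1 a2 by auto
  then have "\<bar>(a - C) * (k * ln k)\<bar> \<le> \<epsilon> * (k * (- ln t) + 1)"
    unfolding abs_mult using kk by (intro mult_mono) auto
  moreover have "\<bar>k * (a * ln a - C * ln C)\<bar> \<le> k * ((C + \<epsilon>) * (\<bar>ln (C - \<epsilon>)\<bar> + \<bar>ln (C + \<epsilon>)\<bar>) + C * \<bar>ln C\<bar>)"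
  proof -
    have "\<bar>a * ln a - C * ln C\<bar> \<le> \<bar>a * ln a\<bar> + \<bar>C * ln C\<bar>" by (rule abs_triangle_ineq4)
    moreover have "\<bar>C * ln C\<bar> = C * \<bar>ln C\<bar>" using Cp by (simp add: abs_mult)
    ultimately have X: "\<bar>a * ln a - C * ln C\<bar> \<le> (C + \<epsilon>) * (\<bar>ln (C - \<epsilon>)\<bar> + \<bar>ln (C + \<epsilon>)\<bar>) + C * \<bar>ln C\<bar>"
      using aln by linarith
    have "\<bar>k * (a * ln a - C * ln C)\<bar> = k * \<bar>a * ln a - C * ln C\<bar>" using kp by (simp add: abs_mult)
    also have "\<dots> \<le> k * ((C + \<epsilon>) * (\<bar>ln (C - \<epsilon>)\<bar> + \<bar>ln (C + \<epsilon>)\<bar>) + C * \<bar>ln C\<bar>)"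
      using X kp by (intro mult_left_mono) auto
    finally show ?thesis .
  qed
  moreover have "g * ln g - (C * k) * ln (C * k) = k * (a * ln a - C * ln C) + (a - C) * (k * ln k)"
    unfolding ga using ap kp Cp by (simp add: ln_mult algebra_simps)
  ultimately show ?thesis by (simp add: algebra_simps) (smt (verit))
qed

lemma C_pointwise:
  fixes k t C :: real
  assumes C: "0 < C" and t: "0 < t" "t < 1" and k: "0 \<le> k" "k \<le> 1/t"
  shows "\<bar>(C * k) * ln (C * k)\<bar> \<le> C * \<bar>ln C\<bar> * k + C * (k * (- ln t) + 1)"
proof (cases "k = 0")
  case False
  then have kp: "k > 0" using k by simp
  have "(C * k) * ln (C * k) = C * k * ln C + C * (k * ln k)" using kp C by (simp add: ln_mult algebra_simps)
  moreover have "\<bar>C * k * ln C\<bar> = C * \<bar>ln C\<bar> * k" using kp C by (simp add: abs_mult)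
  moreover have "\<bar>C * (k * ln k)\<bar> \<le> C * (k * (- ln t) + 1)"
    using klnk_bound[OF t k] C by (simp add: abs_mult)
  ultimately show ?thesis by (smt (verit))
qed (use C t in simp)

lemma integral_estimates:
  fixes k g :: "real \<Rightarrow> real" and K :: "real set"
  assumes k_meas[measurable]: "k \<in> borel_measurable borel" and g_meas[measurable]: "g \<in> borel_measurable borel"
    and eps: "0 < \<epsilon>" "\<epsilon> < C" and t: "0 < t" "t < 1"
    and k0: "\<And>x. 0 \<le> k x" and k1: "\<And>x. k x \<le> 1/t"
    and g1: "\<And>x. (C - \<epsilon>) * k x \<le> g x" and g2: "\<And>x. g x \<le> (C + \<epsilon>) * k x"
    and K_sets[measurable]: "K \<in> sets borel" and K_fin: "emeasure lborel K < \<infinity>"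
    and kK: "\<And>x. x \<notin> K \<Longrightarrow> k x = 0"
    and k_int: "integrable lborel k" and k_integral: "(\<integral>x. k x \<partial>lborel) = LE"
  shows "\<bar>(\<integral>x. g x * ln (g x) \<partial>lborel) - (\<integral>x. (C * k x) * ln (C * k x) \<partial>lborel)\<bar>
           \<le> ((C + \<epsilon>) * (\<bar>ln (C - \<epsilon>)\<bar> + \<bar>ln (C + \<epsilon>)\<bar>) + C * \<bar>ln C\<bar>) * LE + \<epsilon> * (- ln t) * LE + \<epsilon> * measure lborel K"
    and "\<bar>\<integral>x. (C * k x) * ln (C * k x) \<partial>lborel\<bar> \<le> C * \<bar>ln C\<bar> * LE + C * (- ln t) * LE + C * measure lborel K"
proof -
  define c2 where "c2 = (C + \<epsilon>) * (\<bar>ln (C - \<epsilon>)\<bar> + \<bar>ln (C + \<epsilon>)\<bar>) + C * \<bar>ln C\<bar>"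
  have Cp: "C > 0" using eps by simp
  have intK: "integrable lborel (indicator K :: real \<Rightarrow> real)"
    by (rule integrable_real_indicator) (use K_fin in auto)
  have intK': "(\<integral>x. indicator K x \<partial>lborel) = measure lborel K"
    by simp
  define Q where "Q = ((C + \<epsilon>) / t)^2 + 1"
  have g0: "g x = 0" if "x \<notin> K" for x using g1[of x] g2[of x] kK[OF that] by simp
  have gle: "0 \<le> g x \<and> g x \<le> (C + \<epsilon>) / t" for x
  proof -
    have "(C - \<epsilon>) * k x \<ge> 0" using eps k0[of x] by simp
    moreover have "(C + \<epsilon>) * k x \<le> (C + \<epsilon>) * (1/t)" using eps k1[of x] by (intro mult_left_mono) auto
    ultimately show ?thesis using g1[of x] g2[of x] by simp
  qed
  have Ckle: "0 \<le> C * k x \<and> C * k x \<le> (C + \<epsilon>) / t" for x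
  proof -
    have "C * k x \<le> (C + \<epsilon>) * (1/t)" using eps k1[of x] k0[of x] by (intro mult_mono) auto
    then show ?thesis using Cp k0[of x] by simp
  qed
  have uQ: "\<bar>u * ln u\<bar> \<le> Q" if "0 \<le> u" "u \<le> (C + \<epsilon>) / t" for u
  proof -
    have "u^2 \<le> ((C + \<epsilon>) / t)^2" using that by (intro power_mono) auto
    then show ?thesis using xlnx_abs[OF that(1)] unfolding Q_def by linarith
  qed
  have int_gln: "integrable lborel (\<lambda>x. g x * ln (g x))"
  proof (rule Bochner_Integration.integrable_bound)
    show "integrable lborel (\<lambda>x. Q * indicator K x)" using intK by simp
    show "(\<lambda>x. g x * ln (g x)) \<in> borel_measurable lborel" by measurable
    show "AE x in lborel. norm (g x * ln (g x)) \<le> norm (Q * indicator K x)"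
    proof (rule AE_I2)
      fix x show "norm (g x * ln (g x)) \<le> norm (Q * indicator K x)"
        using uQ[of "g x"] gle[of x] g0[of x] unfolding Q_def by (cases "x \<in> K") auto
    qed
  qed
  have int_hln: "integrable lborel (\<lambda>x. (C * k x) * ln (C * k x))"
  proof (rule Bochner_Integration.integrable_bound)
    show "integrable lborel (\<lambda>x. Q * indicator K x)" using intK by simp
    show "(\<lambda>x. (C * k x) * ln (C * k x)) \<in> borel_measurable lborel" by measurable
    show "AE x in lborel. norm ((C * k x) * ln (C * k x)) \<le> norm (Q * indicator K x)"
    proof (rule AE_I2)
      fix x show "norm ((C * k x) * ln (C * k x)) \<le> norm (Q * indicator K x)"
        using uQ[of "C * k x"] Ckle[of x] kK[of x] unfolding Q_def by (cases "x \<in> K") auto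
    qed
  qed
  have int_B: "integrable lborel (\<lambda>x. c2 * k x + \<epsilon> * (- ln t) * k x + \<epsilon> * indicator K x)"
    using k_int intK by auto
  have "\<bar>(\<integral>x. g x * ln (g x) \<partial>lborel) - (\<integral>x. (C * k x) * ln (C * k x) \<partial>lborel)\<bar>
      = \<bar>\<integral>x. g x * ln (g x) - (C * k x) * ln (C * k x) \<partial>lborel\<bar>"
    using int_gln int_hln by simp
  also have "\<dots> \<le> (\<integral>x. \<bar>g x * ln (g x) - (C * k x) * ln (C * k x)\<bar> \<partial>lborel)"
    by (rule integral_abs_bound)
  also have "\<dots> \<le> (\<integral>x. c2 * k x + \<epsilon> * (- ln t) * k x + \<epsilon> * indicator K x \<partial>lborel)"
  proof (rule integral_mono)
    show "integrable lborel (\<lambda>x. \<bar>g x * ln (g x) - (C * k x) * ln (C * k x)\<bar>)"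
      using int_gln int_hln by auto
    show "integrable lborel (\<lambda>x. c2 * k x + \<epsilon> * (- ln t) * k x + \<epsilon> * indicator K x)" by (rule int_B)
    fix x
    show "\<bar>g x * ln (g x) - (C * k x) * ln (C * k x)\<bar> \<le> c2 * k x + \<epsilon> * (- ln t) * k x + \<epsilon> * indicator K x"
    proof (cases "x \<in> K")
      case True
      then show ?thesis using main_pointwise[OF eps t k0[of x] k1[of x] g1[of x] g2[of x]] unfolding c2_def
        by (simp add: algebra_simps)
    next
      case False
      then show ?thesis using g0[of x] kK[of x] by simp
    qed
  qed
  also have "\<dots> = c2 * LE + \<epsilon> * (- ln t) * LE + \<epsilon> * measure lborel K"
    using k_int intK k_integral by simp
  finally show "\<bar>(\<integral>x. g x * ln (g x) \<partial>lborel) - (\<integral>x. (C * k x) * ln (C * k x) \<partial>lborel)\<bar>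
           \<le> ((C + \<epsilon>) * (\<bar>ln (C - \<epsilon>)\<bar> + \<bar>ln (C + \<epsilon>)\<bar>) + C * \<bar>ln C\<bar>) * LE + \<epsilon> * (- ln t) * LE + \<epsilon> * measure lborel K"
    unfolding c2_def .
  have "\<bar>\<integral>x. (C * k x) * ln (C * k x) \<partial>lborel\<bar> \<le> (\<integral>x. \<bar>(C * k x) * ln (C * k x)\<bar> \<partial>lborel)"
    by (rule integral_abs_bound)
  also have "\<dots> \<le> (\<integral>x. C * \<bar>ln C\<bar> * k x + C * (- ln t) * k x + C * indicator K x \<partial>lborel)"
  proof (rule integral_mono)
    show "integrable lborel (\<lambda>x. \<bar>(C * k x) * ln (C * k x)\<bar>)"
      using int_hln by auto
    show "integrable lborel (\<lambda>x. C * \<bar>ln C\<bar> * k x + C * (- ln t) * k x + C * indicator K x)"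
      using k_int intK by auto
    fix x
    show "\<bar>(C * k x) * ln (C * k x)\<bar> \<le> C * \<bar>ln C\<bar> * k x + C * (- ln t) * k x + C * indicator K x"
    proof (cases "x \<in> K")
      case True
      then show ?thesis using C_pointwise[OF Cp t k0[of x] k1[of x]]
        by (simp add: algebra_simps)
    next
      case False
      then show ?thesis using kK[of x] by simp
    qed
  qed
  also have "\<dots> = C * \<bar>ln C\<bar> * LE + C * (- ln t) * LE + C * measure lborel K"
    using k_int intK k_integral by simp
  finally show "\<bar>\<integral>x. (C * k x) * ln (C * k x) \<partial>lborel\<bar> \<le> C * \<bar>ln C\<bar> * LE + C * (- ln t) * LE + C * measure lborel K" .
qed

lemma kernel_facts:
  fixes E :: "real set" and \<mu> :: "real measure" and t R0 R1 :: real
  assumes E_sets[measurable]: "E \<in> sets borel" and E_bdd: "\<And>x. x \<in> E \<Longrightarrow> \<bar>x\<bar> \<le> R1"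
    and mu_prob: "prob_space \<mu>" and mu_sets[measurable_cong]: "sets \<mu> = sets borel"
    and mu_R: "AE y in \<mu>. \<bar>y\<bar> \<le> R0" and t: "0 < t" "t < 1"
  defines "Kn \<equiv> \<lambda>x. \<integral>\<^sup>+y. ennreal (indicator E ((x - y) / t) / t) \<partial>\<mu>"
  shows kn_le: "\<And>x. Kn x \<le> ennreal (1/t)"
    and kn_zero: "\<And>x. \<bar>x\<bar> > R0 + R1 \<Longrightarrow> Kn x = 0"
    and kn_meas: "Kn \<in> borel_measurable borel"
    and kn_int: "(\<integral>\<^sup>+x. Kn x \<partial>lborel) = emeasure lborel E"
proof -
  interpret P: prob_space \<mu> by fact
  show "Kn x \<le> ennreal (1/t)" for x
  proof -
    have "Kn x \<le> (\<integral>\<^sup>+y. ennreal (1/t) \<partial>\<mu>)"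
      unfolding Kn_def by (intro nn_integral_mono ennreal_leI) (use t in \<open>auto simp: indicator_def\<close>)
    also have "\<dots> = ennreal (1/t)" by (simp add: P.emeasure_space_1)
    finally show ?thesis .
  qed
  show "Kn x = 0" if x: "\<bar>x\<bar> > R0 + R1" for x
  proof -
    have "Kn x = (\<integral>\<^sup>+y. 0 \<partial>\<mu>)" unfolding Kn_def
    proof (rule nn_integral_cong_AE)
      show "AE y in \<mu>. ennreal (indicator E ((x - y) / t) / t) = 0"
        using mu_R
      proof eventually_elim
        fix y assume y: "\<bar>y\<bar> \<le> R0"
        have "(x - y) / t \<notin> E"
        proof
          assume "(x - y) / t \<in> E"
          then have a: "\<bar>(x - y) / t\<bar> \<le> R1" by (rule E_bdd)
          have "\<bar>x - y\<bar> \<le> \<bar>(x - y) / t\<bar>"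
            using t mult_right_mono[of t 1 "\<bar>x - y\<bar>"] by (simp add: abs_divide field_simps)
          then show False using a x y by linarith
        qed
        then show "ennreal (indicator E ((x - y) / t) / t) = 0" by simp
      qed
    qed
    then show ?thesis by simp
  qed
  show meas: "Kn \<in> borel_measurable borel" unfolding Kn_def
    by (rule P.borel_measurable_nn_integral) (simp, measurable)
  interpret pair_sigma_finite \<mu> lborel ..
  have "(\<integral>\<^sup>+x. Kn x \<partial>lborel) = (\<integral>\<^sup>+y. \<integral>\<^sup>+x. ennreal (indicator E ((x - y) / t) / t) \<partial>lborel \<partial>\<mu>)"
    unfolding Kn_def by (rule Fubini') measurable
  also have "\<dots> = (\<integral>\<^sup>+y. emeasure lborel E \<partial>\<mu>)"
  proof (rule nn_integral_cong)
    fix y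
    have "(\<integral>\<^sup>+x. ennreal (indicator E ((x - y) / t) / t) \<partial>lborel)
        = ennreal \<bar>t\<bar> * (\<integral>\<^sup>+z. ennreal (indicator E ((y + t * z - y) / t) / t) \<partial>lborel)"
      by (rule nn_integral_real_affine) (use t in auto)
    also have "\<dots> = (\<integral>\<^sup>+z. ennreal t * ennreal (indicator E z / t) \<partial>lborel)"
      using t by (subst nn_integral_cmult) auto
    also have "\<dots> = (\<integral>\<^sup>+z. indicator E z \<partial>lborel)"
    proof (rule nn_integral_cong)
      fix z
      show "ennreal t * ennreal (indicator E z / t) = indicator E z"
        using t by (subst ennreal_mult'[symmetric]) (auto simp: indicator_def)
    qed
    also have "\<dots> = emeasure lborel E" by simp
    finally show "(\<integral>\<^sup>+x. ennreal (indicator E ((x - y) / t) / t) \<partial>lborel) = emeasure lborel E" .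
  qed
  also have "\<dots> = emeasure lborel E" by (simp add: P.emeasure_space_1)
  finally show "(\<integral>\<^sup>+x. Kn x \<partial>lborel) = emeasure lborel E" .
qed

lemma kernel_compare:
  fixes E :: "real set" and \<mu> :: "real measure" and q :: "real \<Rightarrow> real" and a t :: real
  assumes E_sets[measurable]: "E \<in> sets borel" and q_meas[measurable]: "q \<in> borel_measurable borel"
    and mu_sets[measurable_cong]: "sets \<mu> = sets borel" and t: "0 < t" and a: "0 \<le> a"
  shows "(\<integral>\<^sup>+y. ennreal (a * indicator E ((x - y) / t) / t) \<partial>\<mu>) = ennreal a * (\<integral>\<^sup>+y. ennreal (indicator E ((x - y) / t) / t) \<partial>\<mu>)"
    and "(\<And>z. a * indicator E z \<le> q z) \<Longrightarrow> ennreal a * (\<integral>\<^sup>+y. ennreal (indicator E ((x - y) / t) / t) \<partial>\<mu>) \<le> (\<integral>\<^sup>+y. ennreal (q ((x - y) / t) / t) \<partial>\<mu>)"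
    and "(\<And>z. q z \<le> a * indicator E z) \<Longrightarrow> (\<integral>\<^sup>+y. ennreal (q ((x - y) / t) / t) \<partial>\<mu>) \<le> ennreal a * (\<integral>\<^sup>+y. ennreal (indicator E ((x - y) / t) / t) \<partial>\<mu>)"
proof -
  have eq: "ennreal a * (\<integral>\<^sup>+y. ennreal (indicator E ((x - y) / t) / t) \<partial>\<mu>) = (\<integral>\<^sup>+y. ennreal (a * indicator E ((x - y) / t) / t) \<partial>\<mu>)"
    by (subst nn_integral_cmult[symmetric]) (use a t in \<open>auto intro!: nn_integral_cong simp: ennreal_mult'[symmetric]\<close>)
  then show "(\<integral>\<^sup>+y. ennreal (a * indicator E ((x - y) / t) / t) \<partial>\<mu>) = ennreal a * (\<integral>\<^sup>+y. ennreal (indicator E ((x - y) / t) / t) \<partial>\<mu>)" by simp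
  show "ennreal a * (\<integral>\<^sup>+y. ennreal (indicator E ((x - y) / t) / t) \<partial>\<mu>) \<le> (\<integral>\<^sup>+y. ennreal (q ((x - y) / t) / t) \<partial>\<mu>)"
    if h: "\<And>z. a * indicator E z \<le> q z"
    unfolding eq by (intro nn_integral_mono ennreal_leI divide_right_mono h) (use t in auto)
  show "(\<integral>\<^sup>+y. ennreal (q ((x - y) / t) / t) \<partial>\<mu>) \<le> ennreal a * (\<integral>\<^sup>+y. ennreal (indicator E ((x - y) / t) / t) \<partial>\<mu>)"
    if h: "\<And>z. q z \<le> a * indicator E z"
    unfolding eq by (intro nn_integral_mono ennreal_leI divide_right_mono h) (use t in auto)
qed

lemma eventually_ln_large:
  fixes T :: real
  shows "eventually (\<lambda>t. 0 < t \<and> t < 1 \<and> T \<le> - ln t) (at_right 0)"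
proof (rule eventually_at_rightI)
  show "(0::real) < min (exp (- T)) (1/2)" by simp
  fix t :: real assume t: "t \<in> {0<..<min (exp (- T)) (1/2)}"
  then have "ln t < ln (exp (- T))" by (intro ln_less_cancel_iff[THEN iffD2]) auto
  then show "0 < t \<and> t < 1 \<and> T \<le> - ln t" using t by auto
qed

lemma Liminf_eventually_eq:
  assumes "eventually (\<lambda>x. f x = g x) F"
  shows "Liminf F f = Liminf F (g :: _ \<Rightarrow> ereal)"
proof (rule antisym)
  show "Liminf F f \<le> Liminf F g" by (rule Liminf_mono) (use assms in \<open>eventually_elim, auto\<close>)
  show "Liminf F g \<le> Liminf F f" by (rule Liminf_mono) (use assms in \<open>eventually_elim, auto\<close>)
qed

theorem lemma2p6:
  fixes f :: "real \<Rightarrow> real" and C \<epsilon> :: real and \<mu> :: "real measure"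
  assumes f_meas: "f \<in> borel_measurable borel"
    and f_nonneg: "\<And>x. f x \<ge> 0"
    and E_bdd: "bounded (fun_support f)"
    and eps_pos: "0 < \<epsilon>" and eps_C: "\<epsilon> < C"
    and f_close: "\<And>x. x \<in> fun_support f \<Longrightarrow> \<bar>f x - C\<bar> < \<epsilon>"
    and mu_prob: "prob_space \<mu>" and mu_sets: "sets \<mu> = sets borel"
    and mu_bdd: "bounded (measure_support \<mu>)"
  shows "abs (Liminf (at_right 0)
              (\<lambda>t. ereal (entropy_H (\<mu> \<star> dilate t
                 (density lborel (\<lambda>x. ennreal (C * indicator (fun_support f) x)))) / abs (ln t)))
         - Liminf (at_right 0)
              (\<lambda>t. ereal (entropy_H (\<mu> \<star> dilate t
                 (density lborel (\<lambda>x. ennreal (f x)))) / abs (ln t))))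
         \<le> ereal (\<epsilon> * measure lborel (fun_support f))"
proof -
  note [measurable] = f_meas
  note [measurable_cong] = mu_sets
  define E where "E = fun_support f"
  interpret P: prob_space \<mu> by (rule mu_prob)
  have E_closed: "closed E" unfolding E_def fun_support_def by simp
  then have E_sets[measurable]: "E \<in> sets borel" by (rule borel_closed)
  have E_bdd': "bounded E" using E_bdd unfolding E_def .
  obtain R1 where R1: "\<And>x. x \<in> E \<Longrightarrow> \<bar>x\<bar> \<le> R1"
    using E_bdd' unfolding bounded_iff by auto
  have E_fin: "emeasure lborel E < \<infinity>" using E_bdd' by (rule emeasure_bounded_finite)
  define LE where "LE = measure lborel E"
  have LE_eq: "emeasure lborel E = ennreal LE" unfolding LE_def using E_fin by (simp add: emeasure_eq_ennreal_measure)
  have LE_nn: "LE \<ge> 0" unfolding LE_def by simp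
  have f0: "f x = 0" if "x \<notin> E" for x
    using that closure_subset[of "{x. f x \<noteq> 0}"] unfolding E_def fun_support_def by auto
  have fE: "\<bar>f x - C\<bar> < \<epsilon>" if "x \<in> E" for x using f_close that unfolding E_def by auto
  have fb1: "(C - \<epsilon>) * indicator E z \<le> f z" for z
    using fE[of z] f0[of z] by (cases "z \<in> E") auto
  have fb2: "f z \<le> (C + \<epsilon>) * indicator E z" for z
    using fE[of z] f0[of z] by (cases "z \<in> E") auto
  have Cp: "C > 0" using eps_pos eps_C by simp
  obtain R0 where R0: "R0 \<ge> 0" "AE y in \<mu>. \<bar>y\<bar> \<le> R0" using support_AE[OF mu_sets mu_bdd] by blast
  define K where "K = cball (0::real) (R0 + R1)"
  have K_sets[measurable]: "K \<in> sets borel" unfolding K_def by simp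
  have K_fin: "emeasure lborel K < \<infinity>" unfolding K_def by (rule emeasure_bounded_finite) simp
  define LK where "LK = measure lborel K"
  have LK_nn: "LK \<ge> 0" unfolding LK_def by simp
  have fin_f: "finite_measure (density lborel (\<lambda>x. ennreal (f x)))"
  proof (rule finite_measureI)
    have "emeasure (density lborel (\<lambda>x. ennreal (f x))) (space (density lborel (\<lambda>x. ennreal (f x))))
        = (\<integral>\<^sup>+x. ennreal (f x) \<partial>lborel)" by (simp add: emeasure_density)
    also have "\<dots> \<le> (\<integral>\<^sup>+x. ennreal ((C + \<epsilon>) * indicator E x) \<partial>lborel)"
      using fb2 by (intro nn_integral_mono ennreal_leI) auto
    also have "\<dots> = (\<integral>\<^sup>+x. ennreal (C + \<epsilon>) * indicator E x \<partial>lborel)"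
      by (intro nn_integral_cong) (auto simp: indicator_def)
    also have "\<dots> = ennreal (C + \<epsilon>) * emeasure lborel E" by (simp add: nn_integral_cmult_indicator)
    also have "\<dots> < \<infinity>" using E_fin by (simp add: ennreal_mult_less_top)
    finally show "emeasure (density lborel (\<lambda>x. ennreal (f x))) (space (density lborel (\<lambda>x. ennreal (f x)))) \<noteq> \<infinity>" by simp
  qed
  have fin_C: "finite_measure (density lborel (\<lambda>x. ennreal (C * indicator E x)))"
  proof (rule finite_measureI)
    have "emeasure (density lborel (\<lambda>x. ennreal (C * indicator E x))) (space (density lborel (\<lambda>x. ennreal (C * indicator E x))))
        = (\<integral>\<^sup>+x. ennreal (C * indicator E x) \<partial>lborel)" by (simp add: emeasure_density)
    also have "\<dots> = (\<integral>\<^sup>+x. ennreal C * indicator E x \<partial>lborel)"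
      by (intro nn_integral_cong) (auto simp: indicator_def)
    also have "\<dots> = ennreal C * emeasure lborel E" by (simp add: nn_integral_cmult_indicator)
    also have "\<dots> < \<infinity>" using E_fin by (simp add: ennreal_mult_less_top)
    finally show "emeasure (density lborel (\<lambda>x. ennreal (C * indicator E x))) (space (density lborel (\<lambda>x. ennreal (C * indicator E x)))) \<noteq> \<infinity>" by simp
  qed
  define HC where "HC t = entropy_H (\<mu> \<star> dilate t (density lborel (\<lambda>x. ennreal (C * indicator E x))))" for t
  define HG where "HG t = entropy_H (\<mu> \<star> dilate t (density lborel (\<lambda>x. ennreal (f x))))" for t
  define c2 where "c2 = (C + \<epsilon>) * (\<bar>ln (C - \<epsilon>)\<bar> + \<bar>ln (C + \<epsilon>)\<bar>) + C * \<bar>ln C\<bar>"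
  have est: "\<bar>HG t - HC t\<bar> \<le> c2 * LE + \<epsilon> * (- ln t) * LE + \<epsilon> * LK
           \<and> \<bar>HC t\<bar> \<le> C * \<bar>ln C\<bar> * LE + C * (- ln t) * LE + C * LK"
    if t: "0 < t" "t < 1" for t
  proof -
    define Kn where "Kn x = (\<integral>\<^sup>+y. ennreal (indicator E ((x - y) / t) / t) \<partial>\<mu>)" for x
    define Gn where "Gn x = (\<integral>\<^sup>+y. ennreal (f ((x - y) / t) / t) \<partial>\<mu>)" for x
    define k where "k x = enn2real (Kn x)" for x
    define g where "g x = enn2real (Gn x)" for x
    note kf = kernel_facts[OF E_sets R1 mu_prob mu_sets R0(2) t, folded Kn_def]
    have kn_meas[measurable]: "Kn \<in> borel_measurable borel" by (rule kf(3))
    have k_meas[measurable]: "k \<in> borel_measurable borel" unfolding k_def by measurable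
    have gn_meas[measurable]: "Gn \<in> borel_measurable borel" unfolding Gn_def[abs_def]
      by (rule P.borel_measurable_nn_integral) (simp, measurable)
    have g_meas[measurable]: "g \<in> borel_measurable borel" unfolding g_def by measurable
    have Kn_fin: "Kn x < \<top>" for x using kf(1)[of x] by (simp add: order_le_less_trans[OF _ ennreal_less_top])
    have k0: "0 \<le> k x" for x unfolding k_def by simp
    have k1: "k x \<le> 1/t" for x
    proof -
      have "enn2real (Kn x) \<le> enn2real (ennreal (1/t))" using kf(1)[of x] by (intro enn2real_mono) auto
      then show ?thesis unfolding k_def using t by simp
    qed
    have cmp1: "ennreal (C - \<epsilon>) * Kn x \<le> Gn x" for x
      unfolding Kn_def Gn_def by (rule kernel_compare(2)[OF E_sets f_meas mu_sets t(1)]) (use eps_C fb1 in auto)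
    have cmp2: "Gn x \<le> ennreal (C + \<epsilon>) * Kn x" for x
      unfolding Kn_def Gn_def by (rule kernel_compare(3)[OF E_sets f_meas mu_sets t(1)]) (use eps_C eps_pos fb2 in auto)
    have g1: "(C - \<epsilon>) * k x \<le> g x" for x
    proof -
      have "Gn x < \<top>" using cmp2[of x] Kn_fin[of x] by (simp add: order_le_less_trans ennreal_mult_less_top)
      then have "enn2real (ennreal (C - \<epsilon>) * Kn x) \<le> enn2real (Gn x)" by (intro enn2real_mono cmp1)
      then show ?thesis unfolding k_def g_def using eps_C by (simp add: enn2real_mult)
    qed
    have g2: "g x \<le> (C + \<epsilon>) * k x" for x
    proof -
      have "ennreal (C + \<epsilon>) * Kn x < \<top>" using Kn_fin[of x] by (simp add: ennreal_mult_less_top)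
      then have "enn2real (Gn x) \<le> enn2real (ennreal (C + \<epsilon>) * Kn x)" by (intro enn2real_mono cmp2)
      moreover have "enn2real (ennreal (C + \<epsilon>)) = C + \<epsilon>" using eps_C eps_pos by (intro enn2real_ennreal) simp
      ultimately show ?thesis unfolding k_def g_def enn2real_mult by simp
    qed
    have kK: "k x = 0" if "x \<notin> K" for x
    proof -
      have "\<bar>x\<bar> > R0 + R1" using that unfolding K_def by (simp add: dist_real_def)
      then show ?thesis unfolding k_def using kf(2) by simp
    qed
    have hb: "has_bochner_integral lborel k LE"
    proof (rule has_bochner_integral_nn_integral)
      show "AE x in lborel. 0 \<le> k x" using k0 by simp
      show "0 \<le> LE" by (rule LE_nn)
      have "(\<integral>\<^sup>+x. ennreal (k x) \<partial>lborel) = (\<integral>\<^sup>+x. Kn x \<partial>lborel)"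
        unfolding k_def using Kn_fin by (intro nn_integral_cong) simp
      also have "\<dots> = ennreal LE" using kf(4) LE_eq by simp
      finally show "(\<integral>\<^sup>+x. ennreal (k x) \<partial>lborel) = ennreal LE" .
    qed simp
    have k_int: "integrable lborel k" using hb by (auto simp: has_bochner_integral_iff)
    have k_integral: "(\<integral>x. k x \<partial>lborel) = LE" using hb by (auto simp: has_bochner_integral_iff)
    note ie = integral_estimates[OF k_meas g_meas eps_pos eps_C t k0 k1 g1 g2 K_sets K_fin kK k_int k_integral]
    have HG_eq: "HG t = (\<integral>x. g x * ln (g x) \<partial>lborel)"
      unfolding HG_def g_def Gn_def
      by (rule entropy_conv[OF f_meas f_nonneg fin_f _ mu_sets t(1)]) (simp add: P.finite_measure_axioms)
    have HC_eq: "HC t = (\<integral>x. (C * k x) * ln (C * k x) \<partial>lborel)"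
    proof -
      have "HC t = (\<integral>x. enn2real (\<integral>\<^sup>+y. ennreal (C * indicator E ((x - y) / t) / t) \<partial>\<mu>) * ln (enn2real (\<integral>\<^sup>+y. ennreal (C * indicator E ((x - y) / t) / t) \<partial>\<mu>)) \<partial>lborel)"
        unfolding HC_def
        by (rule entropy_conv[OF _ _ fin_C _ mu_sets t(1)]) (auto simp: P.finite_measure_axioms Cp less_imp_le)
      also have "\<dots> = (\<integral>x. (C * k x) * ln (C * k x) \<partial>lborel)"
      proof (rule Bochner_Integration.integral_cong[OF refl])
        fix x
        have "(\<integral>\<^sup>+y. ennreal (C * indicator E ((x - y) / t) / t) \<partial>\<mu>) = ennreal C * Kn x"
          unfolding Kn_def by (rule kernel_compare(1)[OF E_sets f_meas mu_sets t(1)]) (use Cp in simp)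
        then have "enn2real (\<integral>\<^sup>+y. ennreal (C * indicator E ((x - y) / t) / t) \<partial>\<mu>) = C * k x"
          unfolding k_def using Cp by (simp add: enn2real_mult)
        then show "enn2real (\<integral>\<^sup>+y. ennreal (C * indicator E ((x - y) / t) / t) \<partial>\<mu>) * ln (enn2real (\<integral>\<^sup>+y. ennreal (C * indicator E ((x - y) / t) / t) \<partial>\<mu>)) = (C * k x) * ln (C * k x)"
          by simp
      qed
      finally show ?thesis .
    qed
    show ?thesis using ie unfolding HG_eq HC_eq c2_def LK_def by simp
  qed
  define A where "A t = HC t / (- ln t)" for t
  define B where "B t = HG t / (- ln t)" for t
  have conv: "Liminf (at_right 0) (\<lambda>t. ereal (H t / \<bar>ln t\<bar>)) = Liminf (at_right 0) (\<lambda>t. ereal (H t / (- ln t)))"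
    for H :: "real \<Rightarrow> real"
  proof (rule Liminf_eventually_eq)
    show "eventually (\<lambda>t. ereal (H t / \<bar>ln t\<bar>) = ereal (H t / (- ln t))) (at_right 0)"
    proof (rule eventually_at_rightI)
      fix t :: real assume t: "t \<in> {0<..<1}"
      then have "ln t < 0" by simp
      then show "ereal (H t / \<bar>ln t\<bar>) = ereal (H t / (- ln t))" by simp
    qed simp
  qed
  have c2_nn: "c2 \<ge> 0" unfolding c2_def using eps_C eps_pos by simp
  have main: "\<bar>Liminf (at_right 0) (\<lambda>t. ereal (A t)) - Liminf (at_right 0) (\<lambda>t. ereal (B t))\<bar> \<le> ereal (\<epsilon> * LE)"
  proof (rule liminf_close)
    fix \<eta> :: real assume eta: "\<eta> > 0"
    define c3 where "c3 = c2 * LE + \<epsilon> * LK"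
    have c3_nn: "c3 \<ge> 0" unfolding c3_def using c2_nn LE_nn LK_nn eps_pos by simp
    show "eventually (\<lambda>t. \<bar>A t - B t\<bar> \<le> \<epsilon> * LE + \<eta>) (at_right 0)"
      using eventually_ln_large[of "c3 / \<eta>"]
    proof eventually_elim
      fix t :: real assume t: "0 < t \<and> t < 1 \<and> c3 / \<eta> \<le> - ln t"
      define L where "L = - ln t"
      have Lp: "L > 0" unfolding L_def using t by simp
      have "\<bar>A t - B t\<bar> = \<bar>HG t - HC t\<bar> / L"
        unfolding A_def B_def L_def[symmetric] using Lp by (simp add: diff_divide_distrib[symmetric] abs_minus_commute)
      also have "\<dots> \<le> (c3 + \<epsilon> * LE * L) / L"
        using est[of t] t Lp unfolding c3_def L_def by (intro divide_right_mono) (auto simp: algebra_simps)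
      also have "\<dots> = c3 / L + \<epsilon> * LE" using Lp by (simp add: field_simps)
      also have "c3 / L \<le> \<eta>"
      proof -
        have "c3 \<le> \<eta> * L" using t eta unfolding L_def by (simp add: field_simps)
        then show ?thesis using Lp by (simp add: field_simps)
      qed
      finally show "\<bar>A t - B t\<bar> \<le> \<epsilon> * LE + \<eta>" by simp
    qed
  next
    show "eventually (\<lambda>t. \<bar>A t\<bar> \<le> C * \<bar>ln C\<bar> * LE + C * LK + C * LE) (at_right 0)"
      using eventually_ln_large[of 1]
    proof eventually_elim
      fix t :: real assume t: "0 < t \<and> t < 1 \<and> 1 \<le> - ln t"
      define L where "L = - ln t"
      have L1: "L \<ge> 1" unfolding L_def using t by simp
      define N where "N = C * \<bar>ln C\<bar> * LE + C * LK"
      have N_nn: "N \<ge> 0" unfolding N_def using Cp LE_nn LK_nn by simp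
      have "\<bar>A t\<bar> = \<bar>HC t\<bar> / L" unfolding A_def L_def[symmetric] using L1 by (simp add: abs_divide)
      also have "\<dots> \<le> (N + C * L * LE) / L"
        using est[of t] t L1 unfolding N_def L_def by (intro divide_right_mono) (auto simp: algebra_simps)
      also have "\<dots> = N / L + C * LE" using L1 by (simp add: field_simps)
      also have "N / L \<le> N" using L1 N_nn by (simp add: divide_le_eq mult_le_cancel_left1)
      finally show "\<bar>A t\<bar> \<le> C * \<bar>ln C\<bar> * LE + C * LK + C * LE" unfolding N_def by simp
    qed
  qed
  have "\<bar>Liminf (at_right 0) (\<lambda>t. ereal (HC t / \<bar>ln t\<bar>)) - Liminf (at_right 0) (\<lambda>t. ereal (HG t / \<bar>ln t\<bar>))\<bar> \<le> ereal (\<epsilon> * LE)"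
    using main unfolding conv A_def B_def .
  then show ?thesis unfolding HC_def HG_def LE_def E_def .
qed

end
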